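(* $\mathcal T_\rightarrow=Gh_\rightarrow$ and $\mathcal T_\leftarrow=Gh_\leftarrow$, where $h_\rightarrow=\{(0,i\sinh v,\cosh v):v>0\}$ and $h_\leftarrow=\{(0,i\sinh v,\cosh v):v<0\}$.
   Context: $[z\cdot z']=z_0z'_0-z_1z'_1-z_2z'_2$ on $\mathbb C^3$, $z^2=[z\cdot z]$; $X^{(c)}=\{z\in\mathbb C^3:z^2=-1\}$, $z=x+iy$; $V^+=\{y\in\mathbb R^3:y^2>0,y_0>0\}$; fix $e\in V^+$; $\mathcal T_\rightarrow=\{z=x+iy\in X^{(c)}:y^2<0,{\rm sgn}\det(e,x,y)=-1\}$, $\mathcal T_\leftarrow=\{z=x+iy\in X^{(c)}:y^2<0,{\rm sgn}\det(e,x,y)=+1\}$ (independent of the choice of $e$). $G=SO_0(1,2)$ acting on $X^{(c)}$ by $gz=gx+igy$. *)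

theory Defs
  imports "HOL-Analysis.Analysis"
begin

text \<open>Coordinates z_0, z_1, z_2 of the paper are the components 1, 2, 3 of a vector of type ^3.\<close>

definition lor :: "'a::comm_ring ^ 3 \<Rightarrow> 'a ^ 3 \<Rightarrow> 'a" where
  "lor z w = z$1 * w$1 - z$2 * w$2 - z$3 * w$3"

definition Xc :: "(complex ^ 3) set" where
  "Xc = {z. lor z z = -1}"

definition ReV :: "complex ^ 3 \<Rightarrow> real ^ 3" where
  "ReV z = (\<chi> i. Re (z$i))"

definition ImV :: "complex ^ 3 \<Rightarrow> real ^ 3" where
  "ImV z = (\<chi> i. Im (z$i))"

definition Vplus :: "(real ^ 3) set" where
  "Vplus = {y. lor y y > 0 \<and> y$1 > 0}"

definition det3 :: "real ^ 3 \<Rightarrow> real ^ 3 \<Rightarrow> real ^ 3 \<Rightarrow> real" where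
  "det3 e x y = det (vector [e, x, y] :: real ^ 3 ^ 3)"

definition T_right :: "real ^ 3 \<Rightarrow> (complex ^ 3) set" where
  "T_right e = {z \<in> Xc. lor (ImV z) (ImV z) < 0 \<and> sgn (det3 e (ReV z) (ImV z)) = -1}"

definition T_left :: "real ^ 3 \<Rightarrow> (complex ^ 3) set" where
  "T_left e = {z \<in> Xc. lor (ImV z) (ImV z) < 0 \<and> sgn (det3 e (ReV z) (ImV z)) = 1}"

text \<open>G = SO_0(1,2): linear maps preserving the Lorentz form, determinant 1, time-orientation preserving
  (g_00 > 0), i.e. the identity component of O(1,2).\<close>
definition SO0_12 :: "(real ^ 3 ^ 3) set" where
  "SO0_12 = {g. (\<forall>x y. lor (g *v x) (g *v y) = lor x y) \<and> det g = 1 \<and> g$1$1 > 0}"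

definition gact :: "real ^ 3 ^ 3 \<Rightarrow> complex ^ 3 \<Rightarrow> complex ^ 3" where
  "gact g z = (\<chi> i. Complex ((g *v ReV z)$i) ((g *v ImV z)$i))"

definition Gorbit :: "(complex ^ 3) set \<Rightarrow> (complex ^ 3) set" where
  "Gorbit H = {gact g z | g z. g \<in> SO0_12 \<and> z \<in> H}"

definition h_right :: "(complex ^ 3) set" where
  "h_right = {vector [0, \<i> * complex_of_real (sinh v), complex_of_real (cosh v)] | v. v > (0::real)}"

definition h_left :: "(complex ^ 3) set" where
  "h_left = {vector [0, \<i> * complex_of_real (sinh v), complex_of_real (cosh v)] | v. v < (0::real)}"

end

theory Submission
  imports Defs
begin

definition ncross :: "real^3 \<Rightarrow> real^3 \<Rightarrow> real^3" where
  "ncross x y = vector [x$2*y$3 - x$3*y$2, -(x$3*y$1 - x$1*y$3), -(x$1*y$2 - x$2*y$1)]"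

lemma det3_eq: "det3 e x y = lor e (ncross x y)"
  unfolding det3_def det_3 lor_def ncross_def by (simp add: algebra_simps)

lemma lor_ncross_x: "lor (ncross x y) x = 0"
  unfolding lor_def ncross_def by (simp add: algebra_simps)
lemma lor_ncross_y: "lor (ncross x y) y = 0"
  unfolding lor_def ncross_def by (simp add: algebra_simps)
lemma lor_ncross_nn: "lor (ncross x y) (ncross x y) = lor x x * lor y y - (lor x y)^2"
  unfolding lor_def ncross_def by (simp add: algebra_simps power2_eq_square)
lemma ncross_swap: "ncross y x = - ncross x y"
  unfolding ncross_def by (simp add: vec_eq_iff forall_3 algebra_simps)
lemma ncross_scale: "ncross (a *\<^sub>R x) (b *\<^sub>R y) = (a*b) *\<^sub>R ncross x y"
  unfolding ncross_def by (simp add: vec_eq_iff forall_3 algebra_simps)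

lemma lor_sym: "lor x y = lor y x" unfolding lor_def by (simp add: algebra_simps)

lemma lor_scaleR_left: "lor (a *\<^sub>R x) (y::real^3) = a * lor x y"
  unfolding lor_def by (simp add: algebra_simps)
lemma lor_scaleR_right: "lor x (a *\<^sub>R (y::real^3)) = a * lor x y"
  unfolding lor_def by (simp add: algebra_simps)
lemma lor_uminus_right: "lor x (- (y::real^3)) = - lor x y"
  unfolding lor_def by (simp add: algebra_simps)

lemma lor_uminus_left: "lor (- x) (y::real^3) = - lor x y"
  unfolding lor_def by (simp add: algebra_simps)

lemma cone:
  fixes a b :: "real^3"
  assumes "lor a a > 0" "a$1 > 0" "lor b b > 0" "b$1 > 0"
  shows "lor a b > 0"
proof -
  have cs: "(a$2*b$2 + a$3*b$3)^2 \<le> (a$2^2+a$3^2)*(b$2^2+b$3^2)"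
  proof -
    have "0 \<le> (a$2*b$3 - a$3*b$2)^2" by simp
    then show ?thesis by (simp add: power2_eq_square algebra_simps)
  qed
  have "a$2^2+a$3^2 < (a$1)^2" "b$2^2+b$3^2 < (b$1)^2" using assms unfolding lor_def by (simp_all add: power2_eq_square)
  then have "(a$2^2+a$3^2)*(b$2^2+b$3^2) < (a$1*b$1)^2"
    by (simp add: power_mult_distrib mult_strict_mono' add_nonneg_nonneg mult_le_less_imp_less)
  then have "(a$2*b$2 + a$3*b$3)^2 < (a$1*b$1)^2" using cs by linarith
  then have "a$2*b$2 + a$3*b$3 < a$1*b$1" using assms
    by (smt (verit) power_mono mult_pos_pos)
  then show ?thesis unfolding lor_def by simp
qed

lemma lor_complex: "lor z z = Complex (lor (ReV z) (ReV z) - lor (ImV z) (ImV z)) (2 * lor (ReV z) (ImV z))"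
  unfolding lor_def ReV_def ImV_def by (simp add: complex_eq_iff power2_eq_square algebra_simps)

lemma ReV_gact: "ReV (gact g z) = g *v ReV z"
  unfolding ReV_def gact_def by (simp add: vec_eq_iff)
lemma ImV_gact: "ImV (gact g z) = g *v ImV z"
  unfolding ImV_def gact_def by (simp add: vec_eq_iff)
lemma z_decomp: "z = (\<chi> i. Complex (ReV z $ i) (ImV z $ i))"
  unfolding ReV_def ImV_def by (simp add: vec_eq_iff complex_eq_iff)

lemma lor_expand: "lor ((g::real^3^3) *v x) (g *v y) =
   (\<Sum>i\<in>UNIV. \<Sum>j\<in>UNIV. x$i * y$j * lor (column i g) (column j g))"
  unfolding lor_def matrix_vector_mult_def column_def
  apply (simp only: sum_3 vec_lambda_beta)
  by (simp add: algebra_simps)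

lemma lor_axis: "lor (axis i 1) (axis j (1::real)) = (if i = j then (if i = 1 then 1 else -1) else 0)"
  using exhaust_3[of i] exhaust_3[of j] by (auto simp: lor_def axis_def)

lemma lor_pres:
  assumes "\<And>i j. lor (column i g) (column j g) = lor (axis i 1) (axis j (1::real))"
  shows "lor ((g::real^3^3) *v x) (g *v y) = lor x y"
  unfolding lor_expand assms lor_axis by (simp add: sum_3 lor_def)

lemma SO0_cols:
  assumes "g \<in> SO0_12"
  shows "lor (column i g) (column j g) = lor (axis i 1) (axis j (1::real))"
  using assms unfolding SO0_12_def by (simp flip: matrix_vector_mult_basis)

lemma vector_cols: "vector [column 1 g, column 2 g, column 3 g] = transpose (g::real^3^3)"
  by (simp add: vec_eq_iff forall_3 column_def transpose_def)

lemma SO0_ncross: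
  assumes "g \<in> SO0_12"
  shows "ncross (column 2 g) (column 3 g) = column 1 g"
proof -
  define d where "d = ncross (column 2 g) (column 3 g) - column 1 g"
  have dg: "det g = 1" using assms unfolding SO0_12_def by simp
  have l1: "lor (ncross (column 2 g) (column 3 g)) (column 1 g) = 1"
    using det3_eq[of "column 1 g" "column 2 g" "column 3 g"] dg
    unfolding det3_def vector_cols by (simp add: lor_sym)
  have c: "lor (column j g) d = 0" for j
  proof -
    have "lor (column j g) d = lor (column j g) (ncross (column 2 g) (column 3 g)) - lor (column j g) (column 1 g)"
      unfolding d_def lor_def by (simp add: algebra_simps)
    moreover have "lor (column 2 g) (ncross (column 2 g) (column 3 g)) = 0"
      "lor (column 3 g) (ncross (column 2 g) (column 3 g)) = 0"
      using lor_ncross_x lor_ncross_y lor_sym by metis+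
    moreover have "lor (column 1 g) (ncross (column 2 g) (column 3 g)) = 1"
      using l1 lor_sym by metis
    ultimately show ?thesis using exhaust_3[of j] SO0_cols[OF assms] lor_axis
      by (auto simp: lor_axis)
  qed
  define w where "w = (\<chi> i. if i = 1 then d$1 else - d$i)"
  have "transpose g *v w = 0"
  proof -
    have "(transpose g *v w) $ j = lor (column j g) d" for j
      unfolding w_def lor_def matrix_vector_mult_def transpose_def column_def sum_3 by simp
    then show ?thesis using c by (simp add: vec_eq_iff)
  qed
  moreover have "invertible (transpose g)" using dg by (simp add: invertible_det_nz)
  ultimately have "w = 0"
    by (metis invertible_def matrix_left_invertible_ker)
  then have "d = 0" unfolding w_def by (simp add: vec_eq_iff forall_3)
  then show ?thesis unfolding d_def by simp
qed

lemma mv3: "(g::real^3^3) *v vector [a, b, c] = a *\<^sub>R column 1 g + b *\<^sub>R column 2 g + c *\<^sub>R column 3 g"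
  by (simp add: vec_eq_iff matrix_vector_mult_def column_def sum_3 algebra_simps)

definition z0 :: "real \<Rightarrow> complex^3" where
  "z0 v = vector [0, \<i> * complex_of_real (sinh v), complex_of_real (cosh v)]"

lemma ReV_z0: "ReV (z0 v) = vector [0, 0, cosh v]"
  unfolding ReV_def z0_def by (simp add: vec_eq_iff forall_3)
lemma ImV_z0: "ImV (z0 v) = vector [0, sinh v, 0]"
  unfolding ImV_def z0_def by (simp add: vec_eq_iff forall_3)

lemma ReV_ImV_eq: "ReV a = ReV b \<Longrightarrow> ImV a = ImV b \<Longrightarrow> a = b"
  by (metis z_decomp)

lemma forward:
  assumes g: "g \<in> SO0_12" and e: "e \<in> Vplus"
  shows "gact g (z0 v) \<in> Xc" "v \<noteq> 0 \<Longrightarrow> lor (ImV (gact g (z0 v))) (ImV (gact g (z0 v))) < 0"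
    "det3 e (ReV (gact g (z0 v))) (ImV (gact g (z0 v))) = - (cosh v * sinh v) * lor e (column 1 g)"
    "lor e (column 1 g) > 0"
proof -
  have R: "ReV (gact g (z0 v)) = cosh v *\<^sub>R column 3 g" unfolding ReV_gact ReV_z0 mv3 by simp
  have I: "ImV (gact g (z0 v)) = sinh v *\<^sub>R column 2 g" unfolding ImV_gact ImV_z0 mv3 by simp
  have C: "lor (column i g) (column j g) = (if i = j then (if i = 1 then 1 else -1) else 0)" for i j
    using SO0_cols[OF g] lor_axis by simp
  have "lor (gact g (z0 v)) (gact g (z0 v)) = Complex (sinh v ^ 2 - cosh v ^ 2) 0"
    unfolding lor_complex R I by (simp add: lor_scaleR_left lor_scaleR_right C power2_eq_square)
  also have "\<dots> = -1" by (simp add: cosh_square_eq complex_eq_iff)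
  finally show "gact g (z0 v) \<in> Xc" unfolding Xc_def by simp
  show "v \<noteq> 0 \<Longrightarrow> lor (ImV (gact g (z0 v))) (ImV (gact g (z0 v))) < 0"
  proof -
    assume "v \<noteq> 0"
    then have "sinh v \<noteq> 0" by simp
    then have "sinh v * sinh v > 0" by (metis not_real_square_gt_zero)
    moreover have "lor (ImV (gact g (z0 v))) (ImV (gact g (z0 v))) = - (sinh v * sinh v)"
      unfolding I by (simp add: lor_scaleR_left lor_scaleR_right C)
    ultimately show "lor (ImV (gact g (z0 v))) (ImV (gact g (z0 v))) < 0" by linarith
  qed
  show "det3 e (ReV (gact g (z0 v))) (ImV (gact g (z0 v))) = - (cosh v * sinh v) * lor e (column 1 g)"
    unfolding R I det3_eq ncross_scale ncross_swap[of "column 3 g" "column 2 g"] SO0_ncross[OF g]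
    by (simp add: lor_scaleR_right lor_uminus_right)
  show "lor e (column 1 g) > 0"
    apply (rule cone)
    using e g C[of 1 1] unfolding Vplus_def SO0_12_def by (auto simp: column_def)
qed

lemma column_tv: "column k (transpose (vector [a, b, c] :: real^3^3)) = (vector [a, b, c] :: real^3^3) $ k"
  by (simp add: vec_eq_iff column_def transpose_def)

lemma backward:
  fixes \<sigma> :: real
  assumes z: "z \<in> Xc" "lor (ImV z) (ImV z) < 0" and e: "e \<in> Vplus"
    and sg: "\<sigma> = 1 \<or> \<sigma> = -1" and ds: "\<sigma> * det3 e (ReV z) (ImV z) > 0"
  shows "\<exists>v g. \<sigma> * v < 0 \<and> g \<in> SO0_12 \<and> z = gact g (z0 v)"
proof -
  define x where "x = ReV z"
  define y where "y = ImV z"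
  have "lor z z = -1" using z unfolding Xc_def by simp
  then have xx: "lor x x - lor y y = -1" and xy: "lor x y = 0"
    unfolding x_def y_def lor_complex by (simp_all add: complex_eq_iff)
  have yx: "lor y x = 0" using xy lor_sym by metis
  define s0 where "s0 = sqrt (- lor y y)"
  have s0p: "s0 > 0" and s0s: "s0^2 = - lor y y" using z(2) unfolding s0_def y_def by auto
  define s where "s = - \<sigma> * s0"
  have ss: "s^2 = s0^2" unfolding s_def using sg by (auto simp: power2_eq_square)
  have snz: "s \<noteq> 0" unfolding s_def using sg s0p by auto
  define v where "v = arsinh s"
  define c where "c = cosh v"
  have sv: "sinh v = s" unfolding v_def by simp
  have cp: "c > 0" unfolding c_def by simp
  have cc: "c^2 = s^2 + 1" unfolding c_def by (metis cosh_square_eq sv)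
  have lxx: "lor x x = -(c^2)" using xx cc ss s0s by simp
  have lyy: "lor y y = -(s^2)" using ss s0s by simp
  define n where "n = ncross x y"
  have nn: "lor n n = c^2 * s^2" unfolding n_def lor_ncross_nn lxx lyy xy by simp
  have nx: "lor n x = 0" and ny: "lor n y = 0" unfolding n_def using lor_ncross_x lor_ncross_y by auto
  define n' where "n' = \<sigma> *\<^sub>R n"
  have n'n': "lor n' n' > 0" unfolding n'_def using sg nn cp snz
    by (auto simp: lor_scaleR_left lor_scaleR_right lor_uminus_left lor_uminus_right)
  have en': "lor e n' > 0" unfolding n'_def n_def using ds det3_eq[of e x y]
    by (simp add: lor_scaleR_right x_def y_def)
  have n'1: "n'$1 > 0"
  proof (rule ccontr)
    assume "\<not> n'$1 > 0"
    moreover have "n'$1 \<noteq> 0"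
    proof
      assume "n'$1 = 0"
      then have "lor n' n' = - (n'$2 * n'$2 + n'$3 * n'$3)" unfolding lor_def by simp
      moreover have "0 \<le> n'$2 * n'$2 + n'$3 * n'$3" by simp
      ultimately show False using n'n' by linarith
    qed
    ultimately have "(- n')$1 > 0" by simp
    moreover have "lor (- n') (- n') > 0" using n'n' by (simp add: lor_def)
    moreover have "e$1 > 0" "lor e e > 0" using e unfolding Vplus_def by auto
    ultimately have "lor e (- n') > 0" using cone by blast
    then show False using en' by (simp add: lor_uminus_right)
  qed
  define g1 where "g1 = (- 1 / (c * s)) *\<^sub>R n"
  define g2 where "g2 = (1 / s) *\<^sub>R y"
  define g3 where "g3 = (1 / c) *\<^sub>R x"
  have g1': "g1 = (1 / (c * s0)) *\<^sub>R n'"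
    unfolding g1_def n'_def s_def using sg by auto
  define g where "g = transpose (vector [g1, g2, g3] :: real^3^3)"
  have col1: "column 1 g = g1" and col2: "column 2 g = g2" and col3: "column 3 g = g3"
    unfolding g_def column_tv by simp_all
  have C: "lor (column i g) (column j g) = lor (axis i 1) (axis j (1::real))" for i j
  proof -
    have "lor g1 g1 = 1" unfolding g1_def using nn cp snz
      by (simp add: lor_scaleR_left lor_scaleR_right lor_uminus_left lor_uminus_right power2_eq_square field_simps)
    moreover have "lor g2 g2 = -1" unfolding g2_def using lyy snz
      by (simp add: lor_scaleR_left lor_scaleR_right lor_uminus_left lor_uminus_right power2_eq_square field_simps)
    moreover have "lor g3 g3 = -1" unfolding g3_def using lxx cp
      by (simp add: lor_scaleR_left lor_scaleR_right lor_uminus_left lor_uminus_right power2_eq_square field_simps)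
    moreover have "lor g1 g2 = 0" "lor g2 g1 = 0" unfolding g1_def g2_def using ny lor_sym[of n y]
      by (auto simp: lor_scaleR_left lor_scaleR_right lor_uminus_left lor_uminus_right)
    moreover have "lor g1 g3 = 0" "lor g3 g1 = 0" unfolding g1_def g3_def using nx lor_sym[of n x]
      by (auto simp: lor_scaleR_left lor_scaleR_right lor_uminus_left lor_uminus_right)
    moreover have "lor g2 g3 = 0" "lor g3 g2 = 0" unfolding g2_def g3_def using xy yx
      by (auto simp: lor_scaleR_left lor_scaleR_right lor_uminus_left lor_uminus_right)
    ultimately show ?thesis using exhaust_3[of i] exhaust_3[of j]
      by (auto simp: lor_axis col1 col2 col3)
  qed
  have "det g = det3 g1 g2 g3" unfolding g_def det3_def by simp
  also have "\<dots> = lor g1 (ncross g2 g3)" by (rule det3_eq)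
  also have "\<dots> = 1"
  proof -
    have "ncross g2 g3 = (- 1 / (c * s)) *\<^sub>R n"
      unfolding g2_def g3_def ncross_scale n_def ncross_swap[of y x] by (simp add: field_simps)
    then show ?thesis unfolding g1_def using nn cp snz
      by (simp add: lor_scaleR_left lor_scaleR_right lor_uminus_left lor_uminus_right power2_eq_square field_simps)
  qed
  finally have dg: "det g = 1" .
  have g11: "g$1$1 > 0"
  proof -
    have "g$1$1 = g1$1" using col1 unfolding column_def by (metis vec_lambda_beta)
    also have "\<dots> > 0" unfolding g1' using n'1 cp s0p by simp
    finally show ?thesis .
  qed
  have gS: "g \<in> SO0_12" unfolding SO0_12_def using lor_pres[OF C] dg g11 by simp
  have "gact g (z0 v) = z"
  proof (rule ReV_ImV_eq)
    show "ReV (gact g (z0 v)) = ReV z" unfolding ReV_gact ReV_z0 mv3 col3 g3_def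
      using cp by (simp add: c_def[symmetric] x_def)
    show "ImV (gact g (z0 v)) = ImV z" unfolding ImV_gact ImV_z0 mv3 col2 g2_def
      using snz by (simp add: sv y_def)
  qed
  moreover have "\<sigma> * v < 0" unfolding v_def s_def using sg s0p by auto
  ultimately show ?thesis using gS by metis
qed

lemma h_right_z0: "h_right = z0 ` {v. v > 0}"
  unfolding h_right_def z0_def by auto
lemma h_left_z0: "h_left = z0 ` {v. v < 0}"
  unfolding h_left_def z0_def by auto

theorem proposition5:
  fixes e :: "real ^ 3"
  assumes "e \<in> Vplus"
  shows "T_right e = Gorbit h_right \<and> T_left e = Gorbit h_left"
proof
  show "T_right e = Gorbit h_right"
  proof
    show "T_right e \<subseteq> Gorbit h_right"
    proof
      fix z assume "z \<in> T_right e"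
      then have z: "z \<in> Xc" "lor (ImV z) (ImV z) < 0" "det3 e (ReV z) (ImV z) < 0"
        unfolding T_right_def by (auto simp: sgn_real_def split: if_splits)
      obtain v g where "(-1) * v < 0" "g \<in> SO0_12" "z = gact g (z0 v)"
        using backward[OF z(1,2) assms, of "-1"] z(3) by auto
      then show "z \<in> Gorbit h_right" unfolding Gorbit_def h_right_z0 by auto
    qed
    show "Gorbit h_right \<subseteq> T_right e"
    proof
      fix z assume "z \<in> Gorbit h_right"
      then obtain g v where g: "g \<in> SO0_12" and v: "v > 0" and zz: "z = gact g (z0 v)"
        unfolding Gorbit_def h_right_z0 by auto
      have "det3 e (ReV z) (ImV z) < 0"
        unfolding zz forward(3)[OF g assms] using forward(4)[OF g assms] v
        by (simp add: mult_pos_pos)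
      then show "z \<in> T_right e" unfolding T_right_def zz
        using forward(1,2)[OF g assms, of v] v by auto
    qed
  qed
  show "T_left e = Gorbit h_left"
  proof
    show "T_left e \<subseteq> Gorbit h_left"
    proof
      fix z assume "z \<in> T_left e"
      then have z: "z \<in> Xc" "lor (ImV z) (ImV z) < 0" "det3 e (ReV z) (ImV z) > 0"
        unfolding T_left_def by (auto simp: sgn_real_def split: if_splits)
      obtain v g where "1 * v < 0" "g \<in> SO0_12" "z = gact g (z0 v)"
        using backward[OF z(1,2) assms, of 1] z(3) by auto
      then show "z \<in> Gorbit h_left" unfolding Gorbit_def h_left_z0 by auto
    qed
    show "Gorbit h_left \<subseteq> T_left e"
    proof
      fix z assume "z \<in> Gorbit h_left"
      then obtain g v where g: "g \<in> SO0_12" and v: "v < 0" and zz: "z = gact g (z0 v)"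
        unfolding Gorbit_def h_left_z0 by auto
      have "sinh v < 0" using v by simp
      then have "det3 e (ReV z) (ImV z) > 0"
        unfolding zz forward(3)[OF g assms] using forward(4)[OF g assms]
        by (simp add: mult_pos_neg zero_less_mult_iff mult_less_0_iff)
      then show "z \<in> T_left e" unfolding T_left_def zz
        using forward(1,2)[OF g assms, of v] v by auto
    qed
  qed
qed

end
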